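(* Let $d\ge 7$ be odd and let ${\rm F}_d\subset\mathbb{P}^3(\mathbb{C})$ be the Fermat surface $x^d-y^d-z^d+w^d=0$. Then the maximal number of pairwise disjoint lines contained in ${\rm F}_d$ equals $3d$. *)

theory Defs
  imports "HOL-Analysis.Analysis"
begin

text \<open>Homogeneous coordinates (x,y,z,w) of P^3(C) are vectors in complex^4,
  with x = v$1, y = v$2, z = v$3, w = v$4.  A projective line is the
  cone of a 2-dimensional complex linear subspace of C^4, i.e. the complex
  span of two C-linearly independent vectors.\<close>

definition cspan2 :: "complex^4 \<Rightarrow> complex^4 \<Rightarrow> (complex^4) set" where
  "cspan2 p q = {a *s p + b *s q | a b. True}"

definition proj_line :: "(complex^4) set \<Rightarrow> bool" where
  "proj_line L \<longleftrightarrow> (\<exists>p q. (\<forall>a b. a *s p + b *s q = 0 \<longrightarrow> a = 0 \<and> b = 0)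
                            \<and> L = cspan2 p q)"

definition fermat :: "nat \<Rightarrow> complex^4 \<Rightarrow> bool" where
  "fermat d v \<longleftrightarrow> (v$1)^d - (v$2)^d - (v$3)^d + (v$4)^d = 0"

definition line_on_fermat :: "nat \<Rightarrow> (complex^4) set \<Rightarrow> bool" where
  "line_on_fermat d L \<longleftrightarrow> proj_line L \<and> (\<forall>v\<in>L. fermat d v)"

text \<open>Two projective lines are disjoint iff the subspaces meet only in 0.\<close>
definition disjoint_lines_on_fermat :: "nat \<Rightarrow> (complex^4) set set \<Rightarrow> bool" where
  "disjoint_lines_on_fermat d S \<longleftrightarrow>
     (\<forall>L\<in>S. line_on_fermat d L) \<and> pairwise (\<lambda>L M. L \<inter> M = {0}) S"

end

theory Submission
  imports Defs
begin

lemma coeff_extract: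
  fixes c1 c2 c3 c4 \<alpha> \<beta> \<gamma> \<delta> :: complex
  assumes H: "\<forall>s t. c1* s^d + c2*t^d + c3*(\<alpha>* s+\<beta>*t)^d + c4*(\<gamma>* s+\<delta>*t)^d = 0"
    and q: "0 < q" "q < d"
  shows "c3 * \<alpha>^q * \<beta>^(d-q) + c4 * \<gamma>^q * \<delta>^(d-q) = 0"
proof -
  define cf where "cf i = (if i = d then c1 else 0) + (if i = 0 then c2 else 0)
      + of_nat (d choose i) * (c3 * \<alpha>^i * \<beta>^(d-i) + c4 * \<gamma>^i * \<delta>^(d-i))" for i
  have "\<forall>s. (\<Sum>i\<le>d. cf i * s^i) = 0"
  proof
    fix s :: complex
    have e1: "(\<alpha>* s+\<beta>*1)^d = (\<Sum>i\<le>d. of_nat (d choose i) * (\<alpha>^i * \<beta>^(d-i)) * s^i)"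
      by (simp add: binomial_ring power_mult_distrib mult_ac)
    have e2: "(\<gamma>* s+\<delta>*1)^d = (\<Sum>i\<le>d. of_nat (d choose i) * (\<gamma>^i * \<delta>^(d-i)) * s^i)"
      by (simp add: binomial_ring power_mult_distrib mult_ac)
    have e3: "(\<Sum>i\<le>d. (if i = d then c1 else 0) * s^i) = c1 * s^d"
    proof -
      have "(\<Sum>i\<le>d. (if i = d then c1 else 0) * s^i) = (\<Sum>i\<le>d. if i = d then c1 * s^d else 0)"
        by (rule sum.cong) auto
      thus ?thesis by simp
    qed
    have e4: "(\<Sum>i\<le>d. (if i = 0 then c2 else 0) * s^i) = c2"
    proof -
      have "(\<Sum>i\<le>d. (if i = 0 then c2 else 0) * s^i) = (\<Sum>i\<le>d. if i = 0 then c2 else 0)"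
        by (rule sum.cong) auto
      thus ?thesis by simp
    qed
    have "(\<Sum>i\<le>d. cf i * s^i) = (\<Sum>i\<le>d. (if i = d then c1 else 0) * s^i)
        + (\<Sum>i\<le>d. (if i = 0 then c2 else 0) * s^i)
        + c3 * (\<Sum>i\<le>d. of_nat (d choose i) * (\<alpha>^i * \<beta>^(d-i)) * s^i)
        + c4 * (\<Sum>i\<le>d. of_nat (d choose i) * (\<gamma>^i * \<delta>^(d-i)) * s^i)"
      unfolding cf_def by (simp add: sum.distrib sum_distrib_left algebra_simps)
    also have "\<dots> = c1* s^d + c2*1^d + c3*(\<alpha>* s+\<beta>*1)^d + c4*(\<gamma>* s+\<delta>*1)^d"
      using e1 e2 e3 e4 by simp
    also have "\<dots> = 0" using H by blast
    finally show "(\<Sum>i\<le>d. cf i * s^i) = 0" .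
  qed
  hence "cf q = 0" using polyfun_eq_0[of cf d] q by auto
  moreover have "(d choose q) \<noteq> 0" using q by simp
  moreover have "cf q = of_nat (d choose q) * (c3 * \<alpha>^q * \<beta>^(d-q) + c4 * \<gamma>^q * \<delta>^(d-q))"
    using q unfolding cf_def by simp
  ultimately show ?thesis by simp
qed

lemma core_lines:
  fixes c1 c2 c3 c4 \<alpha> \<beta> \<gamma> \<delta> :: complex
  assumes H: "\<forall>s t. c1* s^d + c2*t^d + c3*(\<alpha>* s+\<beta>*t)^d + c4*(\<gamma>* s+\<delta>*t)^d = 0"
    and d: "3 \<le> d" and nz: "c1 \<noteq> 0" "c2 \<noteq> 0" "c3 \<noteq> 0" "c4 \<noteq> 0"
  shows "(\<alpha> = 0 \<and> \<delta> = 0) \<or> (\<beta> = 0 \<and> \<gamma> = 0)"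
proof -
  have h10: "c1 + c3*\<alpha>^d + c4*\<gamma>^d = 0" using H[rule_format, of 1 0] d by (simp add: power_0_left)
  have h01: "c2 + c3*\<beta>^d + c4*\<delta>^d = 0" using H[rule_format, of 0 1] d by (simp add: power_0_left)
  obtain e where de: "d = Suc (Suc e)" and e: "1 \<le> e" using d
    by (metis Suc_le_D One_nat_def Suc_le_mono numeral_3_eq_3)
  have E1: "c3 * \<alpha> * \<beta>^(Suc e) + c4 * \<gamma> * \<delta>^(Suc e) = 0"
    using coeff_extract[OF H, of 1] de by simp
  have E2: "c3 * \<alpha>^2 * \<beta>^e + c4 * \<gamma>^2 * \<delta>^e = 0"
    using coeff_extract[OF H, of 2] de e by simp
  have Ed: "c3 * \<alpha>^(Suc e) * \<beta> + c4 * \<gamma>^(Suc e) * \<delta> = 0"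
    using coeff_extract[OF H, of "Suc e"] de by simp
  show ?thesis
  proof (rule ccontr)
    assume nc: "\<not> ?thesis"
    show False
    proof (cases "\<alpha> = 0")
      case True
      with nc have "\<delta> \<noteq> 0" by auto
      with E1 True nz have "\<gamma> = 0" by simp
      with h10 True de nz show False by simp
    next
      case a: False
      show False
      proof (cases "\<delta> = 0")
        case True
        with Ed a nz have "\<beta> = 0" by simp
        with h01 True de nz show False by simp
      next
        case dl: False
        have b: "\<beta> \<noteq> 0"
        proof
          assume "\<beta> = 0"
          with Ed dl nz have "\<gamma> = 0" by auto
          with nc \<open>\<beta> = 0\<close> show False by auto
        qed
        have g: "\<gamma> \<noteq> 0"
        proof
          assume "\<gamma> = 0"
          with E1 a nz have "\<beta> = 0" by auto
          with b show False by simp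
        qed
        have "c3 * \<alpha>^2 * \<beta>^(Suc e) * \<delta> = - c4 * \<alpha> * \<gamma> * \<delta>^(Suc (Suc e))"
        proof -
          have "c3 * \<alpha> * \<beta>^(Suc e) = - c4 * \<gamma> * \<delta>^(Suc e)" using E1 by (simp add: eq_neg_iff_add_eq_0)
          hence "(c3 * \<alpha> * \<beta>^(Suc e)) * (\<alpha> * \<delta>) = (- c4 * \<gamma> * \<delta>^(Suc e)) * (\<alpha> * \<delta>)" by simp
          thus ?thesis by (simp add: algebra_simps power2_eq_square)
        qed
        moreover have "c3 * \<alpha>^2 * \<beta>^(Suc e) * \<delta> = - c4 * \<gamma>^2 * \<delta>^(Suc e) * \<beta>"
        proof -
          have "c3 * \<alpha>^2 * \<beta>^e = - c4 * \<gamma>^2 * \<delta>^e" using E2 by (simp add: eq_neg_iff_add_eq_0)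
          hence "(c3 * \<alpha>^2 * \<beta>^e) * (\<beta> * \<delta>) = (- c4 * \<gamma>^2 * \<delta>^e) * (\<beta> * \<delta>)" by simp
          thus ?thesis by (simp add: algebra_simps)
        qed
        ultimately have "(c4 * \<gamma> * \<delta>^(Suc e)) * (\<alpha> * \<delta>) = (c4 * \<gamma> * \<delta>^(Suc e)) * (\<gamma> * \<beta>)"
          by (simp add: algebra_simps power2_eq_square)
        hence ad: "\<alpha> * \<delta> = \<gamma> * \<beta>" using nz g dl by simp
        have "c3 * \<alpha> * \<beta>^(Suc e) * \<delta> = - c4 * \<gamma> * \<delta>^(Suc e) * \<delta>"
          using arg_cong[OF E1, of "\<lambda>x. x * \<delta>"] by (simp add: algebra_simps eq_neg_iff_add_eq_0)
        moreover have "c3 * \<alpha> * \<beta>^(Suc e) * \<delta> = c3 * \<beta>^(Suc e) * (\<alpha> * \<delta>)" by (simp add: algebra_simps)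
        moreover have "c3 * \<beta>^(Suc e) * (\<gamma> * \<beta>) = c3 * \<gamma> * \<beta>^(Suc (Suc e))" by (simp add: algebra_simps)
        moreover have "- c4 * \<gamma> * \<delta>^(Suc e) * \<delta> = - c4 * \<gamma> * \<delta>^(Suc (Suc e))" by (simp add: algebra_simps)
        ultimately have "c3 * \<gamma> * \<beta>^(Suc (Suc e)) = - c4 * \<gamma> * \<delta>^(Suc (Suc e))"
          using ad by metis
        hence "\<gamma> * (c3 * \<beta>^(Suc (Suc e)) + c4 * \<delta>^(Suc (Suc e))) = 0"
          by (simp add: algebra_simps)
        hence "c3 * \<beta>^d + c4 * \<delta>^d = 0" using g de by simp
        with h01 nz show False by (simp add: add.assoc)
      qed
    qed
  qed
qed


definition E :: "nat \<Rightarrow> int \<Rightarrow> complex" where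
  "E d k = exp (2 * of_real pi * \<i> * of_int k / of_nat d)"

lemma E_add: "E d (a + b) = E d a * E d b"
  unfolding E_def by (simp add: exp_add[symmetric] algebra_simps add_divide_distrib)

lemma E_nz: "E d k \<noteq> 0" unfolding E_def by simp

lemma E_eq_1: assumes "0 < d" shows "E d k = 1 \<longleftrightarrow> int d dvd k"
proof -
  have "E d k = 1 \<longleftrightarrow> (\<exists>n::int. 2 * pi * of_int k / of_nat d = of_int (2 * n) * pi)"
    unfolding E_def exp_eq_1 using assms by (simp add: Re_divide Im_divide power2_eq_square)
  also have "\<dots> \<longleftrightarrow> (\<exists>n::int. of_int k = of_int n * (of_nat d::real))"
    using assms by (auto simp: field_simps)
  also have "\<dots> \<longleftrightarrow> (\<exists>n::int. k = n * int d)"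
    by (metis of_int_eq_iff of_int_mult of_int_of_nat_eq)
  also have "\<dots> \<longleftrightarrow> int d dvd k" by (auto simp: dvd_def mult.commute)
  finally show ?thesis .
qed

lemma E_eq: assumes "0 < d" shows "E d a = E d b \<longleftrightarrow> int d dvd (a - b)"
proof -
  have "E d a = E d (a - b) * E d b" using E_add[of d "a-b" b] by simp
  hence "E d a = E d b \<longleftrightarrow> E d (a - b) = 1" using E_nz[of d b] by auto
  thus ?thesis using E_eq_1[OF assms] by simp
qed

lemma E_pow: assumes "0 < d" shows "E d k ^ d = 1"
proof -
  have "E d k ^ d = exp (of_nat d * (2 * of_real pi * \<i> * of_int k / of_nat d))"
    unfolding E_def by (simp only: exp_of_nat_mult)
  also have "\<dots> = exp (\<i> * (of_int k * (of_real pi * 2)))"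
    using assms by (simp add: field_simps)
  also have "\<dots> = 1" by simp
  finally show ?thesis .
qed

definition vec4 :: "complex \<Rightarrow> complex \<Rightarrow> complex \<Rightarrow> complex \<Rightarrow> complex^4" where
  "vec4 a b c e = (\<chi> i. if i = 1 then a else if i = 2 then b else if i = 3 then c else e)"

lemma vec4_nth [simp]: "vec4 a b c e $ 1 = a" "vec4 a b c e $ 2 = b" "vec4 a b c e $ 3 = c" "vec4 a b c e $ 4 = e"
  unfolding vec4_def by simp_all

lemma vec4_eqI: "v$1 = w$1 \<Longrightarrow> v$2 = w$2 \<Longrightarrow> v$3 = w$3 \<Longrightarrow> v$4 = (w::complex^4)$4 \<Longrightarrow> v = w"
  by (simp add: vec_eq_iff forall_4)

definition LA :: "complex \<Rightarrow> complex \<Rightarrow> (complex^4) set" where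
  "LA a b = cspan2 (vec4 a 1 0 0) (vec4 0 0 b 1)"
definition LB :: "complex \<Rightarrow> complex \<Rightarrow> (complex^4) set" where
  "LB a b = cspan2 (vec4 a 0 1 0) (vec4 0 b 0 1)"
definition LC :: "complex \<Rightarrow> complex \<Rightarrow> (complex^4) set" where
  "LC a b = cspan2 (vec4 a 0 0 1) (vec4 0 b 1 0)"

lemma mem_LA: "v \<in> LA a b \<longleftrightarrow> v$1 = a * v$2 \<and> v$3 = b * v$4"
proof
  assume "v \<in> LA a b"
  then obtain s t where "v = s *s vec4 a 1 0 0 + t *s vec4 0 0 b 1"
    unfolding LA_def cspan2_def by auto
  thus "v$1 = a * v$2 \<and> v$3 = b * v$4" by simp
next
  assume h: "v$1 = a * v$2 \<and> v$3 = b * v$4"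
  have "v = (v$2) *s vec4 a 1 0 0 + (v$4) *s vec4 0 0 b 1"
    by (rule vec4_eqI) (use h in auto)
  thus "v \<in> LA a b" unfolding LA_def cspan2_def by blast
qed

lemma mem_LB: "v \<in> LB a b \<longleftrightarrow> v$1 = a * v$3 \<and> v$2 = b * v$4"
proof
  assume "v \<in> LB a b"
  then obtain s t where "v = s *s vec4 a 0 1 0 + t *s vec4 0 b 0 1"
    unfolding LB_def cspan2_def by auto
  thus "v$1 = a * v$3 \<and> v$2 = b * v$4" by simp
next
  assume h: "v$1 = a * v$3 \<and> v$2 = b * v$4"
  have "v = (v$3) *s vec4 a 0 1 0 + (v$4) *s vec4 0 b 0 1"
    by (rule vec4_eqI) (use h in auto)
  thus "v \<in> LB a b" unfolding LB_def cspan2_def by blast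
qed

lemma mem_LC: "v \<in> LC a b \<longleftrightarrow> v$1 = a * v$4 \<and> v$2 = b * v$3"
proof
  assume "v \<in> LC a b"
  then obtain s t where "v = s *s vec4 a 0 0 1 + t *s vec4 0 b 1 0"
    unfolding LC_def cspan2_def by auto
  thus "v$1 = a * v$4 \<and> v$2 = b * v$3" by simp
next
  assume h: "v$1 = a * v$4 \<and> v$2 = b * v$3"
  have "v = (v$4) *s vec4 a 0 0 1 + (v$3) *s vec4 0 b 1 0"
    by (rule vec4_eqI) (use h in auto)
  thus "v \<in> LC a b" unfolding LC_def cspan2_def by blast
qed

lemma proj_LA: "proj_line (LA a b)"
  unfolding proj_line_def LA_def
proof (intro exI conjI allI impI)
  fix s t :: complex assume "s *s vec4 a 1 0 0 + t *s vec4 0 0 b 1 = 0"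
  hence "(s *s vec4 a 1 0 0 + t *s vec4 0 0 b 1)$2 = 0" "(s *s vec4 a 1 0 0 + t *s vec4 0 0 b 1)$4 = 0"
    by simp_all
  thus "s = 0" "t = 0" by simp_all
qed simp

lemma proj_LB: "proj_line (LB a b)"
  unfolding proj_line_def LB_def
proof (intro exI conjI allI impI)
  fix s t :: complex assume "s *s vec4 a 0 1 0 + t *s vec4 0 b 0 1 = 0"
  hence "(s *s vec4 a 0 1 0 + t *s vec4 0 b 0 1)$3 = 0" "(s *s vec4 a 0 1 0 + t *s vec4 0 b 0 1)$4 = 0"
    by simp_all
  thus "s = 0" "t = 0" by simp_all
qed simp

lemma proj_LC: "proj_line (LC a b)"
  unfolding proj_line_def LC_def
proof (intro exI conjI allI impI)
  fix s t :: complex assume "s *s vec4 a 0 0 1 + t *s vec4 0 b 1 0 = 0"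
  hence "(s *s vec4 a 0 0 1 + t *s vec4 0 b 1 0)$4 = 0" "(s *s vec4 a 0 0 1 + t *s vec4 0 b 1 0)$3 = 0"
    by simp_all
  thus "s = 0" "t = 0" by simp_all
qed simp

lemma fermat_LA: "a^d = 1 \<Longrightarrow> b^d = 1 \<Longrightarrow> v \<in> LA a b \<Longrightarrow> fermat d v"
  unfolding mem_LA fermat_def by (simp add: power_mult_distrib)
lemma fermat_LB: "a^d = 1 \<Longrightarrow> b^d = 1 \<Longrightarrow> v \<in> LB a b \<Longrightarrow> fermat d v"
  unfolding mem_LB fermat_def by (simp add: power_mult_distrib)
lemma fermat_LC: "a^d = -1 \<Longrightarrow> b^d = -1 \<Longrightarrow> v \<in> LC a b \<Longrightarrow> fermat d v"
  unfolding mem_LC fermat_def by (simp add: power_mult_distrib)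

lemma zero_in: "0 \<in> LA a b" "0 \<in> LB a b" "0 \<in> LC a b"
  by (simp_all add: mem_LA mem_LB mem_LC)

lemma disj_AA: "a \<noteq> a' \<Longrightarrow> b \<noteq> b' \<Longrightarrow> LA a b \<inter> LA a' b' = {0}"
proof -
  assume h: "a \<noteq> a'" "b \<noteq> b'"
  { fix v assume "v \<in> LA a b" "v \<in> LA a' b'"
    hence e: "v$1 = a * v$2" "v$3 = b * v$4" "v$1 = a' * v$2" "v$3 = b' * v$4" by (auto simp: mem_LA)
    hence "(a - a') * v$2 = 0" "(b - b') * v$4 = 0" by (auto simp: algebra_simps)
    hence "v$2 = 0" "v$4 = 0" using h by auto
    hence "v = 0" using e by (intro vec4_eqI) auto }
  thus ?thesis using zero_in by blast
qed

lemma disj_BB: "a \<noteq> a' \<Longrightarrow> b \<noteq> b' \<Longrightarrow> LB a b \<inter> LB a' b' = {0}"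
proof -
  assume h: "a \<noteq> a'" "b \<noteq> b'"
  { fix v assume "v \<in> LB a b" "v \<in> LB a' b'"
    hence e: "v$1 = a * v$3" "v$2 = b * v$4" "v$1 = a' * v$3" "v$2 = b' * v$4" by (auto simp: mem_LB)
    hence "(a - a') * v$3 = 0" "(b - b') * v$4 = 0" by (auto simp: algebra_simps)
    hence "v$3 = 0" "v$4 = 0" using h by auto
    hence "v = 0" using e by (intro vec4_eqI) auto }
  thus ?thesis using zero_in by blast
qed

lemma disj_CC: "a \<noteq> a' \<Longrightarrow> b \<noteq> b' \<Longrightarrow> LC a b \<inter> LC a' b' = {0}"
proof -
  assume h: "a \<noteq> a'" "b \<noteq> b'"
  { fix v assume "v \<in> LC a b" "v \<in> LC a' b'"
    hence e: "v$1 = a * v$4" "v$2 = b * v$3" "v$1 = a' * v$4" "v$2 = b' * v$3" by (auto simp: mem_LC)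
    hence "(a - a') * v$4 = 0" "(b - b') * v$3 = 0" by (auto simp: algebra_simps)
    hence "v$4 = 0" "v$3 = 0" using h by auto
    hence "v = 0" using e by (intro vec4_eqI) auto }
  thus ?thesis using zero_in by blast
qed

lemma disj_AB: "a * b' \<noteq> a' * b \<Longrightarrow> LA a b \<inter> LB a' b' = {0}"
proof -
  assume h: "a * b' \<noteq> a' * b"
  { fix v assume "v \<in> LA a b" "v \<in> LB a' b'"
    hence e: "v$1 = a * v$2" "v$3 = b * v$4" "v$1 = a' * v$3" "v$2 = b' * v$4" by (auto simp: mem_LA mem_LB)
    hence "(a * b' - a' * b) * v$4 = 0" by (auto simp: algebra_simps)
    hence "v$4 = 0" using h by auto
    hence "v = 0" using e by (intro vec4_eqI) auto }
  thus ?thesis using zero_in by blast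
qed

lemma disj_AC: "a * b * b' \<noteq> a' \<Longrightarrow> LA a b \<inter> LC a' b' = {0}"
proof -
  assume h: "a * b * b' \<noteq> a'"
  { fix v assume "v \<in> LA a b" "v \<in> LC a' b'"
    hence e: "v$1 = a * v$2" "v$3 = b * v$4" "v$1 = a' * v$4" "v$2 = b' * v$3" by (auto simp: mem_LA mem_LC)
    hence "(a * b * b' - a') * v$4 = 0" by (auto simp: algebra_simps)
    hence "v$4 = 0" using h by auto
    hence "v = 0" using e by (intro vec4_eqI) auto }
  thus ?thesis using zero_in by blast
qed

lemma disj_BC: "a \<noteq> 0 \<Longrightarrow> a' \<noteq> 0 \<Longrightarrow> a * b \<noteq> a' * b' \<Longrightarrow> LB a b \<inter> LC a' b' = {0}"
proof -
  assume h: "a \<noteq> 0" "a' \<noteq> 0" "a * b \<noteq> a' * b'"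
  { fix v assume "v \<in> LB a b" "v \<in> LC a' b'"
    hence e: "v$1 = a * v$3" "v$2 = b * v$4" "v$1 = a' * v$4" "v$2 = b' * v$3" by (auto simp: mem_LB mem_LC)
    have "(a * v$3) * (b * v$4) = (a' * v$4) * (b' * v$3)" using e by simp
    hence pr: "(a * b - a' * b') * (v$3 * v$4) = 0" by (simp add: algebra_simps)
    have "a * b - a' * b' \<noteq> 0" using h by simp
    hence "v$3 * v$4 = 0" using pr by simp
    hence "v$3 = 0 \<or> v$4 = 0" by simp
    moreover have "v$3 = 0 \<Longrightarrow> v$4 = 0" using e h by auto
    moreover have "v$4 = 0 \<Longrightarrow> v$3 = 0" using e h by auto
    ultimately have "v$3 = 0" "v$4 = 0" by blast+
    hence "v = 0" using e by (intro vec4_eqI) auto }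
  thus ?thesis using zero_in by blast
qed

lemma E_neq: "0 < d \<Longrightarrow> \<not> int d dvd (a - b) \<Longrightarrow> E d a \<noteq> E d b"
  using E_eq by blast

lemma framework:
  fixes fA fB gA gB hA hB :: "nat \<Rightarrow> int"
  assumes d: "0 < d" "odd d"
  and inj: "\<And>x y. x < d \<Longrightarrow> y < d \<Longrightarrow> x \<noteq> y \<Longrightarrow>
       \<not> int d dvd (fA x - fA y) \<and> \<not> int d dvd (fB x - fB y) \<and> \<not> int d dvd (gA x - gA y) \<and>
       \<not> int d dvd (gB x - gB y) \<and> \<not> int d dvd (hA x - hA y) \<and> \<not> int d dvd (hB x - hB y)"
  and c12: "\<And>x y. x < d \<Longrightarrow> y < d \<Longrightarrow> \<not> int d dvd (fB x - fA x - gB y + gA y)"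
  and c13: "\<And>x y. x < d \<Longrightarrow> y < d \<Longrightarrow> \<not> int d dvd (fA x + fB x + hB y - hA y)"
  and c23: "\<And>x y. x < d \<Longrightarrow> y < d \<Longrightarrow> \<not> int d dvd (gA x + gB x - hA y - hB y)"
  shows "\<exists>S. disjoint_lines_on_fermat d S \<and> finite S \<and> card S = 3 * d"
proof -
  define F where "F = (\<lambda>(x::nat, k::nat). if k = 0 then LA (E d (fA x)) (E d (fB x))
     else if k = 1 then LB (E d (gA x)) (E d (gB x)) else LC (- E d (hA x)) (- E d (hB x)))"
  define I where "I = {..<d} \<times> {0::nat, 1, 2}"
  have finI: "finite I" and cardI: "card I = 3 * d" unfolding I_def by (auto simp: card_cartesian_product)
  have mneg: "(- E d a) * (- E d b) = E d (a + b)" for a b by (simp add: E_add)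
  have dsj: "F i \<inter> F j = {0}" if "i \<in> I" "j \<in> I" "i \<noteq> j" for i j
  proof -
    obtain x k where i: "i = (x, k)" "x < d" "k \<in> {0,1,2}" using \<open>i \<in> I\<close> unfolding I_def by auto
    obtain y l where j: "j = (y, l)" "y < d" "l \<in> {0,1,2}" using \<open>j \<in> I\<close> unfolding I_def by auto
    have AB: "LA (E d (fA x')) (E d (fB x')) \<inter> LB (E d (gA y')) (E d (gB y')) = {0}" if "x' < d" "y' < d" for x' y'
    proof (rule disj_AB)
      have "\<not> int d dvd (fA x' + gB y' - (gA y' + fB x'))"
        using c12[OF that] by (metis dvd_minus_iff minus_diff_eq diff_diff_eq2 add.commute diff_add_eq diff_diff_eq)
      thus "E d (fA x') * E d (gB y') \<noteq> E d (gA y') * E d (fB x')"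
        using E_neq[OF d(1)] by (simp add: E_add[symmetric])
    qed
    have AC: "LA (E d (fA x')) (E d (fB x')) \<inter> LC (- E d (hA y')) (- E d (hB y')) = {0}" if "x' < d" "y' < d" for x' y'
    proof (rule disj_AC)
      have "E d (fA x' + fB x' + hB y') \<noteq> E d (hA y')"
        using c13[OF that] E_neq[OF d(1)] by (simp add: algebra_simps)
      thus "E d (fA x') * E d (fB x') * - E d (hB y') \<noteq> - E d (hA y')"
        by (simp add: E_add)
    qed
    have BC: "LB (E d (gA x')) (E d (gB x')) \<inter> LC (- E d (hA y')) (- E d (hB y')) = {0}" if "x' < d" "y' < d" for x' y'
    proof (rule disj_BC)
      show "E d (gA x') \<noteq> 0" "- E d (hA y') \<noteq> 0" by (simp_all add: E_nz)
      have "E d (gA x' + gB x') \<noteq> E d (hA y' + hB y')"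
        using c23[OF that] E_neq[OF d(1)] by (simp add: algebra_simps)
      thus "E d (gA x') * E d (gB x') \<noteq> - E d (hA y') * - E d (hB y')"
        by (simp add: E_add)
    qed
    show ?thesis
    proof (cases "k = l")
      case True
      with i j that have xy: "x \<noteq> y" by auto
      note I = inj[OF i(2) j(2) xy]
      have n: "E d (fA x) \<noteq> E d (fA y)" "E d (fB x) \<noteq> E d (fB y)" "E d (gA x) \<noteq> E d (gA y)"
        "E d (gB x) \<noteq> E d (gB y)" "E d (hA x) \<noteq> E d (hA y)" "E d (hB x) \<noteq> E d (hB y)"
        using I E_neq[OF d(1)] by blast+
      show ?thesis using True i j n unfolding F_def
        by (auto intro!: disj_AA disj_BB disj_CC)
    next
      case False
      then consider "k = 0" "l = 1" | "k = 0" "l = 2" | "k = 1" "l = 2" | "k = 1" "l = 0" | "k = 2" "l = 0" | "k = 2" "l = 1"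
        using i j by auto
      thus ?thesis
      proof cases
        case 1 thus ?thesis using AB[OF i(2) j(2)] i j unfolding F_def by simp
      next
        case 2 thus ?thesis using AC[OF i(2) j(2)] i j unfolding F_def by simp
      next
        case 3 thus ?thesis using BC[OF i(2) j(2)] i j unfolding F_def by simp
      next
        case 4 thus ?thesis using AB[OF j(2) i(2)] i j unfolding F_def by (simp add: Int_commute)
      next
        case 5 thus ?thesis using AC[OF j(2) i(2)] i j unfolding F_def by (simp add: Int_commute)
      next
        case 6 thus ?thesis using BC[OF j(2) i(2)] i j unfolding F_def by (simp add: Int_commute)
      qed
    qed
  qed
  have nz: "F i \<noteq> {0}" for i
  proof -
    obtain x k where i: "i = (x, k)" by (cases i)
    have "vec4 (E d (fA x)) 1 0 0 \<in> LA (E d (fA x)) (E d (fB x))" by (simp add: mem_LA)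
    moreover have "vec4 (E d (gA x)) 0 1 0 \<in> LB (E d (gA x)) (E d (gB x))" by (simp add: mem_LB)
    moreover have "vec4 (- E d (hA x)) 0 0 1 \<in> LC (- E d (hA x)) (- E d (hB x))" by (simp add: mem_LC)
    moreover have "vec4 a 1 0 0 \<noteq> 0" "vec4 a 0 1 0 \<noteq> 0" "vec4 a 0 0 1 \<noteq> 0" for a
      by (metis vec4_nth zero_index one_neq_zero)+
    ultimately show ?thesis unfolding F_def i by (auto split: if_splits)
  qed
  have injF: "inj_on F I"
  proof
    fix i j assume "i \<in> I" "j \<in> I" "F i = F j"
    thus "i = j" using dsj[of i j] nz[of i] by auto
  qed
  have onF: "line_on_fermat d (F i)" for i
  proof -
    obtain x k where i: "i = (x, k)" by (cases i)
    have r1: "E d a ^ d = 1" for a using E_pow[OF d(1)] .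
    have r2: "(- E d a) ^ d = -1" for a using r1[of a] d(2) by (simp add: power_minus_odd)
    show ?thesis unfolding line_on_fermat_def F_def i
      using proj_LA proj_LB proj_LC fermat_LA[OF r1 r1] fermat_LB[OF r1 r1] fermat_LC[OF r2 r2]
      by auto
  qed
  show ?thesis
  proof (intro exI conjI)
    show "disjoint_lines_on_fermat d (F ` I)"
      unfolding disjoint_lines_on_fermat_def pairwise_def
    proof (intro conjI ballI impI)
      fix L assume "L \<in> F ` I" thus "line_on_fermat d L" using onF by auto
    next
      fix L M assume "L \<in> F ` I" "M \<in> F ` I" "L \<noteq> M"
      then obtain i j where "i \<in> I" "j \<in> I" "L = F i" "M = F j" "i \<noteq> j" by auto
      thus "L \<inter> M = {0}" using dsj by simp
    qed
    show "finite (F ` I)" using finI by simp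
    show "card (F ` I) = 3 * d" using card_image[OF injF] cardI by simp
  qed
qed


definition cf :: "4 \<Rightarrow> complex" where "cf n = (if n = 1 \<or> n = 4 then 1 else -1)"

lemma cf_nz: "cf n \<noteq> 0" unfolding cf_def by simp

lemma UNIV4_distinct:
  fixes i j k l :: 4
  assumes "i \<noteq> j" "i \<noteq> k" "i \<noteq> l" "j \<noteq> k" "j \<noteq> l" "k \<noteq> l"
  shows "UNIV = {i, j, k, l}"
  using assms exhaust_4[of i] exhaust_4[of j] exhaust_4[of k] exhaust_4[of l] exhaust_4
  by (smt (verit) UNIV_eq_I insert_iff)

lemma fermat_sum:
  fixes i j k l :: 4
  assumes "i \<noteq> j" "i \<noteq> k" "i \<noteq> l" "j \<noteq> k" "j \<noteq> l" "k \<noteq> l"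
  shows "fermat d v \<longleftrightarrow> cf i * (v$i)^d + cf j * (v$j)^d + cf k * (v$k)^d + cf l * (v$l)^d = 0"
proof -
  have "fermat d v \<longleftrightarrow> (\<Sum>n\<in>UNIV. cf n * (v$n)^d) = 0"
    unfolding fermat_def sum_4 cf_def by (simp add: algebra_simps)
  also have "(\<Sum>n\<in>UNIV. cf n * (v$n)^d) = cf i * (v$i)^d + cf j * (v$j)^d + cf k * (v$k)^d + cf l * (v$l)^d"
    unfolding UNIV4_distinct[OF assms] using assms by (simp add: algebra_simps)
  finally show ?thesis .
qed

lemma step2:
  fixes i j k l :: 4 and p q :: "complex^4"
  assumes dist: "i \<noteq> j" "i \<noteq> k" "i \<noteq> l" "j \<noteq> k" "j \<noteq> l" "k \<noteq> l"
    and D: "p$i * q$j - p$j * q$i \<noteq> 0"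
    and F: "\<forall>v\<in>cspan2 p q. fermat d v" and d: "3 \<le> d"
  shows "\<exists>v w. v \<in> cspan2 p q \<and> w \<in> cspan2 p q \<and> v$i = 1 \<and> w$j = 1 \<and>
     ((v$j = 0 \<and> v$k = 0 \<and> w$i = 0 \<and> w$l = 0) \<or> (v$j = 0 \<and> v$l = 0 \<and> w$i = 0 \<and> w$k = 0))"
proof -
  define Dt where "Dt = p$i * q$j - p$j * q$i"
  define V where "V s t = ((s * q$j - t * q$i) / Dt) *s p + ((t * p$i - s * p$j) / Dt) *s q" for s t
  define \<alpha> where "\<alpha> = (p$k * q$j - q$k * p$j) / Dt"
  define \<beta> where "\<beta> = (q$k * p$i - p$k * q$i) / Dt"
  define \<gamma> where "\<gamma> = (p$l * q$j - q$l * p$j) / Dt"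
  define \<delta> where "\<delta> = (q$l * p$i - p$l * q$i) / Dt"
  have Dt: "Dt \<noteq> 0" using D unfolding Dt_def .
  have Vin: "V s t \<in> cspan2 p q" for s t unfolding V_def cspan2_def by blast
  have Vn: "V s t $ n = ((s * q$j - t * q$i) * p$n + (t * p$i - s * p$j) * q$n) / Dt" for s t n
    unfolding V_def by (simp add: add_divide_distrib)
  have Vi: "V s t $ i = s" for s t
  proof -
    have "(s * q$j - t * q$i) * p$i + (t * p$i - s * p$j) * q$i = s * Dt"
      unfolding Dt_def by (simp add: algebra_simps)
    thus ?thesis using Vn[of s t i] Dt by simp
  qed
  have Vj: "V s t $ j = t" for s t
  proof -
    have "(s * q$j - t * q$i) * p$j + (t * p$i - s * p$j) * q$j = t * Dt"
      unfolding Dt_def by (simp add: algebra_simps)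
    thus ?thesis using Vn[of s t j] Dt by simp
  qed
  have Vk: "V s t $ k = \<alpha> * s + \<beta> * t" for s t
  proof -
    have "(s * q$j - t * q$i) * p$k + (t * p$i - s * p$j) * q$k = (p$k * q$j - q$k * p$j) * s + (q$k * p$i - p$k * q$i) * t"
      by (simp add: algebra_simps)
    thus ?thesis using Vn[of s t k] Dt unfolding \<alpha>_def \<beta>_def by (simp add: add_divide_distrib)
  qed
  have Vl: "V s t $ l = \<gamma> * s + \<delta> * t" for s t
  proof -
    have "(s * q$j - t * q$i) * p$l + (t * p$i - s * p$j) * q$l = (p$l * q$j - q$l * p$j) * s + (q$l * p$i - p$l * q$i) * t"
      by (simp add: algebra_simps)
    thus ?thesis using Vn[of s t l] Dt unfolding \<gamma>_def \<delta>_def by (simp add: add_divide_distrib)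
  qed
  have H: "\<forall>s t. cf i * s^d + cf j * t^d + cf k * (\<alpha> * s + \<beta> * t)^d + cf l * (\<gamma> * s + \<delta> * t)^d = 0"
  proof (intro allI)
    fix s t
    have "fermat d (V s t)" using F Vin by blast
    thus "cf i * s^d + cf j * t^d + cf k * (\<alpha> * s + \<beta> * t)^d + cf l * (\<gamma> * s + \<delta> * t)^d = 0"
      using fermat_sum[OF dist, of d "V s t"] Vi Vj Vk Vl by simp
  qed
  have C: "(\<alpha> = 0 \<and> \<delta> = 0) \<or> (\<beta> = 0 \<and> \<gamma> = 0)"
    by (rule core_lines[OF H d cf_nz cf_nz cf_nz cf_nz])
  show ?thesis
    by (rule exI[of _ "V 1 0"], rule exI[of _ "V 0 1"]) (use C Vin Vi Vj Vk Vl in auto)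
qed

definition good :: "complex^4 \<Rightarrow> bool" where
  "good v \<longleftrightarrow> (v$3 = 0 \<and> v$4 = 0) \<or> (v$2 = 0 \<and> v$4 = 0) \<or> (v$2 = 0 \<and> v$3 = 0)"

lemma good_of_zeros:
  fixes a b :: 4
  assumes "a \<noteq> b" "a \<noteq> 1" "b \<noteq> 1" "v$a = 0" "v$b = 0"
  shows "good v"
  using assms exhaust_4[of a] exhaust_4[of b] unfolding good_def by auto

lemma exists_minor:
  fixes p q :: "complex^4"
  assumes "\<forall>a b. a *s p + b *s q = 0 \<longrightarrow> a = 0 \<and> b = 0"
  shows "\<exists>i j. p$i * q$j - p$j * q$i \<noteq> 0"
proof (rule ccontr)
  assume "\<not> ?thesis"
  hence z: "p$i * q$j - p$j * q$i = 0" for i j by auto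
  have "p \<noteq> 0" using assms[rule_format, of 1 0] by auto
  then obtain i where pi: "p$i \<noteq> 0" by (auto simp: vec_eq_iff)
  have "(q$i) *s p + (- p$i) *s q = 0"
    using z[of i] by (simp add: vec_eq_iff algebra_simps)
  hence "q$i = 0 \<and> - p$i = 0" using assms by blast
  thus False using pi by simp
qed

lemma other_two:
  fixes i j :: 4
  assumes "i \<noteq> j"
  shows "\<exists>k l. i \<noteq> k \<and> i \<noteq> l \<and> j \<noteq> k \<and> j \<noteq> l \<and> k \<noteq> l"
proof -
  have "card (UNIV - {i, j}) = 2" using assms by (simp add: card_Diff_subset)
  then obtain k l where "UNIV - {i, j} = {k, l}" "k \<noteq> l" by (auto simp: card_2_iff)
  thus ?thesis by blast
qed

lemma line_good:
  assumes L: "line_on_fermat d L" and d: "3 \<le> d"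
  shows "\<exists>v\<in>L. v \<noteq> 0 \<and> good v"
proof -
  obtain p q where ind: "\<forall>a b. a *s p + b *s q = 0 \<longrightarrow> a = 0 \<and> b = 0" and Lpq: "L = cspan2 p q"
    using L unfolding line_on_fermat_def proj_line_def by blast
  have F: "\<forall>v\<in>cspan2 p q. fermat d v" using L Lpq unfolding line_on_fermat_def by blast
  obtain i j where D: "p$i * q$j - p$j * q$i \<noteq> 0" using exists_minor[OF ind] by blast
  have ij: "i \<noteq> j" using D by auto
  obtain k l where kl: "i \<noteq> k" "i \<noteq> l" "j \<noteq> k" "j \<noteq> l" "k \<noteq> l" using other_two[OF ij] by blast
  obtain v w where vw: "v \<in> cspan2 p q" "w \<in> cspan2 p q" "v$i = 1" "w$j = 1"
     "(v$j = 0 \<and> v$k = 0 \<and> w$i = 0 \<and> w$l = 0) \<or> (v$j = 0 \<and> v$l = 0 \<and> w$i = 0 \<and> w$k = 0)"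
    using step2[OF ij kl(1,2,3,4,5) D F d] by blast
  have v0: "v \<noteq> 0" "w \<noteq> 0" using vw by auto
  from vw(5) show ?thesis
  proof
    assume h: "v$j = 0 \<and> v$k = 0 \<and> w$i = 0 \<and> w$l = 0"
    show ?thesis
    proof (cases "j = 1 \<or> k = 1")
      case True
      hence "i \<noteq> 1" "l \<noteq> 1" using ij kl by auto
      hence "good w" using good_of_zeros[of i l w] kl h by auto
      thus ?thesis using vw v0 Lpq by auto
    next
      case False
      hence "good v" using good_of_zeros[of j k v] kl h by auto
      thus ?thesis using vw v0 Lpq by auto
    qed
  next
    assume h: "v$j = 0 \<and> v$l = 0 \<and> w$i = 0 \<and> w$k = 0"
    show ?thesis
    proof (cases "j = 1 \<or> l = 1")
      case True
      hence "i \<noteq> 1" "k \<noteq> 1" using ij kl by auto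
      hence "good w" using good_of_zeros[of i k w] kl h by auto
      thus ?thesis using vw v0 Lpq by auto
    next
      case False
      hence "good v" using good_of_zeros[of j l v] kl h by auto
      thus ?thesis using vw v0 Lpq by auto
    qed
  qed
qed

definition PP :: "nat \<Rightarrow> (complex^4) set" where
  "PP d = (\<lambda>x. vec4 x 1 0 0) ` {x. x^d = 1} \<union> (\<lambda>x. vec4 x 0 1 0) ` {x. x^d = 1} \<union> (\<lambda>x. vec4 x 0 0 1) ` {x. x^d = -1}"

lemma PP_finite: "0 < d \<Longrightarrow> finite (PP d)"
  unfolding PP_def using finite_nth_roots by auto

lemma PP_card: assumes "0 < d" shows "card (PP d) \<le> 3 * d"
proof -
  have c1: "card {x::complex. x^d = 1} = d" using card_nth_roots[of 1 d] assms by simp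
  have c2: "card {x::complex. x^d = -1} = d" using card_nth_roots[of "-1" d] assms by simp
  have "card (PP d) \<le> card ((\<lambda>x. vec4 x 1 0 0) ` {x. x^d = 1} \<union> (\<lambda>x. vec4 x 0 1 0) ` {x. x^d = 1})
      + card ((\<lambda>x. vec4 x 0 0 1) ` {x::complex. x^d = -1})"
    unfolding PP_def by (rule card_Un_le)
  also have "\<dots> \<le> (card ((\<lambda>x. vec4 x 1 0 0) ` {x::complex. x^d = 1}) + card ((\<lambda>x. vec4 x 0 1 0) ` {x::complex. x^d = 1}))
      + card ((\<lambda>x. vec4 x 0 0 1) ` {x::complex. x^d = -1})"
    by (intro add_right_mono card_Un_le)
  also have "\<dots> \<le> (d + d) + d"
    by (intro add_mono card_image_le[THEN order_trans]) (use c1 c2 assms in auto)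
  finally show ?thesis by simp
qed

lemma PP_nz: "w \<in> PP d \<Longrightarrow> w \<noteq> 0"
  unfolding PP_def by (auto simp: vec_eq_iff forall_4)

lemma cspan2_scale: "v \<in> cspan2 p q \<Longrightarrow> r *s v \<in> cspan2 p q"
proof -
  assume "v \<in> cspan2 p q"
  then obtain a b where "v = a *s p + b *s q" unfolding cspan2_def by blast
  hence "r *s v = (r * a) *s p + (r * b) *s q" by (simp add: vec_eq_iff algebra_simps)
  thus ?thesis unfolding cspan2_def by blast
qed

lemma line_PP:
  assumes L: "line_on_fermat d L" and d: "3 \<le> d"
  shows "\<exists>w\<in>L. w \<in> PP d"
proof -
  obtain v where v: "v \<in> L" "v \<noteq> 0" "good v" using line_good[OF L d] by blast
  obtain p q where Lpq: "L = cspan2 p q"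
    using L unfolding line_on_fermat_def proj_line_def by blast
  have fv: "fermat d v" using L v unfolding line_on_fermat_def by blast
  have d0: "0 < d" using d by simp
  have sc: "r *s v \<in> L" for r using cspan2_scale v(1) Lpq by blast
  have nz: "v$1 \<noteq> 0 \<or> v$2 \<noteq> 0 \<or> v$3 \<noteq> 0 \<or> v$4 \<noteq> 0" using v(2) by (auto simp: vec_eq_iff forall_4)
  from v(3) consider "v$3 = 0" "v$4 = 0" | "v$2 = 0" "v$4 = 0" | "v$2 = 0" "v$3 = 0"
    unfolding good_def by blast
  thus ?thesis
  proof cases
    case 1
    hence e: "(v$1)^d = (v$2)^d" using fv d0 unfolding fermat_def by (simp add: power_0_left)
    have "v$2 \<noteq> 0" using e nz d0 1 by (auto simp: power_0_left)
    hence "(1 / v$2) *s v = vec4 (v$1 / v$2) 1 0 0" "(v$1 / v$2)^d = 1"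
      using 1 e by (auto intro!: vec4_eqI simp: power_divide)
    thus ?thesis using sc[of "1 / v$2"] unfolding PP_def by (metis (mono_tags, lifting) UnI1 image_eqI mem_Collect_eq)
  next
    case 2
    hence e: "(v$1)^d = (v$3)^d" using fv d0 unfolding fermat_def by (simp add: power_0_left)
    have "v$3 \<noteq> 0" using e nz d0 2 by (auto simp: power_0_left)
    hence "(1 / v$3) *s v = vec4 (v$1 / v$3) 0 1 0" "(v$1 / v$3)^d = 1"
      using 2 e by (auto intro!: vec4_eqI simp: power_divide)
    thus ?thesis using sc[of "1 / v$3"] unfolding PP_def by (metis (mono_tags, lifting) UnI1 UnI2 image_eqI mem_Collect_eq)
  next
    case 3
    hence e: "(v$1)^d + (v$4)^d = 0" using fv d0 unfolding fermat_def by (simp add: power_0_left)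
    have "v$4 \<noteq> 0" using e nz d0 3 by (auto simp: power_0_left)
    hence "(1 / v$4) *s v = vec4 (v$1 / v$4) 0 0 1" "(v$1 / v$4)^d = -1"
      using 3 e by (auto intro!: vec4_eqI simp: power_divide field_simps eq_neg_iff_add_eq_0)
    thus ?thesis using sc[of "1 / v$4"] unfolding PP_def by (metis (mono_tags, lifting) UnI2 image_eqI mem_Collect_eq)
  qed
qed

theorem upper_bound:
  assumes S: "disjoint_lines_on_fermat d S" and d: "3 \<le> d"
  shows "finite S \<and> card S \<le> 3 * d"
proof -
  have d0: "0 < d" using d by simp
  have "\<forall>L\<in>S. \<exists>w. w \<in> L \<and> w \<in> PP d"
    using line_PP[OF _ d] S unfolding disjoint_lines_on_fermat_def by blast
  then obtain f where f: "\<And>L. L \<in> S \<Longrightarrow> f L \<in> L \<and> f L \<in> PP d" by metis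
  have inj: "inj_on f S"
  proof
    fix L M assume LM: "L \<in> S" "M \<in> S" "f L = f M"
    show "L = M"
    proof (rule ccontr)
      assume "L \<noteq> M"
      hence "L \<inter> M = {0}" using S LM unfolding disjoint_lines_on_fermat_def pairwise_def by blast
      moreover have "f L \<in> L \<inter> M" using f[of L] f[of M] LM by auto
      moreover have "f L \<noteq> 0" using f LM PP_nz by blast
      ultimately show False by blast
    qed
  qed
  have sub: "f ` S \<subseteq> PP d" using f by blast
  have fin: "finite S" using inj sub PP_finite[OF d0] finite_imageD finite_subset by blast
  have "card S = card (f ` S)" using card_image[OF inj] by simp
  also have "\<dots> \<le> card (PP d)" using sub PP_finite[OF d0] card_mono by blast
  also have "\<dots> \<le> 3 * d" using PP_card[OF d0] .
  finally show ?thesis using fin by simp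
qed


definition f7 :: "int list" where "f7 = [0,1,2,4,3,6,5]"
definition g7 :: "int list" where "g7 = [2,4,6,5,1,0,3]"
definition h7 :: "int list" where "h7 = [4,2,1,0,3,6,5]"

lemma less7: "(x::nat) < 7 \<Longrightarrow> x = 0 \<or> x = 1 \<or> x = 2 \<or> x = 3 \<or> x = 4 \<or> x = 5 \<or> x = 6" by auto

lemma lower7: "\<exists>S. disjoint_lines_on_fermat 7 S \<and> finite S \<and> card S = 3 * 7"
proof (rule framework[where fA = "\<lambda>x. int x" and fB = "\<lambda>x. f7 ! x"
        and gA = "\<lambda>x. int x" and gB = "\<lambda>x. g7 ! x"
        and hA = "\<lambda>x. int x" and hB = "\<lambda>x. h7 ! x"])
  show "0 < (7::nat)" "odd (7::nat)" by auto
next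
  fix x y :: nat assume "x < 7" "y < 7" "x \<noteq> y"
  thus "\<not> int 7 dvd (int x - int y) \<and> \<not> int 7 dvd (f7 ! x - f7 ! y) \<and> \<not> int 7 dvd (int x - int y) \<and>
       \<not> int 7 dvd (g7 ! x - g7 ! y) \<and> \<not> int 7 dvd (int x - int y) \<and> \<not> int 7 dvd (h7 ! x - h7 ! y)"
    using less7[of x] less7[of y] unfolding f7_def g7_def h7_def by auto
next
  fix x y :: nat assume "x < 7" "y < 7"
  thus "\<not> int 7 dvd (f7 ! x - int x - g7 ! y + int y)"
    using less7[of x] less7[of y] unfolding f7_def g7_def h7_def by auto
next
  fix x y :: nat assume "x < 7" "y < 7"
  thus "\<not> int 7 dvd (int x + f7 ! x + h7 ! y - int y)"
    using less7[of x] less7[of y] unfolding f7_def g7_def h7_def by auto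
next
  fix x y :: nat assume "x < 7" "y < 7"
  thus "\<not> int 7 dvd (int x + g7 ! x - int y - h7 ! y)"
    using less7[of x] less7[of y] unfolding f7_def g7_def h7_def by auto
qed


lemma dvd_small:
  fixes d e :: int
  assumes "0 < d" "d dvd e" "- (6*d) < e" "e < 6*d"
  shows "e = -5*d \<or> e = -4*d \<or> e = -3*d \<or> e = -2*d \<or> e = -d \<or> e = 0 \<or> e = d \<or> e = 2*d \<or> e = 3*d \<or> e = 4*d \<or> e = 5*d"
proof -
  obtain k where k: "e = d * k" using assms(2) by (auto simp: dvd_def)
  have "d * k < d * 6" using assms(4) k by (simp add: mult.commute)
  hence "k < 6" using assms(1) by simp
  have "d * (-6) < d * k" using assms(3) k by (simp add: mult.commute)
  hence "-6 < k" using assms(1) by (simp only: mult_less_cancel_left_pos)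
  have "k \<in> {-5..5}" using \<open>k < 6\<close> \<open>-6 < k\<close> by auto
  hence "k = -5 \<or> k = -4 \<or> k = -3 \<or> k = -2 \<or> k = -1 \<or> k = 0 \<or> k = 1 \<or> k = 2 \<or> k = 3 \<or> k = 4 \<or> k = 5"
    by (auto simp: atLeastAtMost_iff) presburger
  thus ?thesis using k by (auto simp: algebra_simps)
qed

definition P1 :: "int \<Rightarrow> int \<Rightarrow> int" where
  "P1 d x = (if x < d - 4 then x else if x = d - 4 then d - 1 else x - 1)"
definition P2 :: "int \<Rightarrow> int \<Rightarrow> int" where
  "P2 m x = (if x < m - 1 then x else if x < 2*m then x + 1 else m - 1)"
definition al :: "int \<Rightarrow> int" where
  "al m = (if m mod 4 = 0 then -2 else if m mod 4 = 1 then m else if m mod 4 = 2 then m else 0)"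
definition be :: "int \<Rightarrow> int" where
  "be m = (if m mod 4 = 0 then 0 else if m mod 4 = 1 then m+1 else if m mod 4 = 2 then m+2 else 1)"

lemma dvd_small10:
  fixes d e :: int
  assumes "0 < d" "d dvd e" "- (10*d) < e" "e < 10*d"
  shows "e = -9*d \<or> e = -8*d \<or> e = -7*d \<or> e = -6*d \<or> e = -5*d \<or> e = -4*d \<or> e = -3*d \<or> e = -2*d \<or> e = -d \<or> e = 0 \<or> e = d \<or> e = 2*d \<or> e = 3*d \<or> e = 4*d \<or> e = 5*d \<or> e = 6*d \<or> e = 7*d \<or> e = 8*d \<or> e = 9*d"
proof -
  obtain k where k: "e = d * k" using assms(2) by (auto simp: dvd_def)
  have "d * k < d * 10" using assms(4) k by (simp add: mult.commute)
  hence "k < 10" using assms(1) by simp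
  have "d * (-10) < d * k" using assms(3) k by (simp add: mult.commute)
  hence "-10 < k" using assms(1) by (simp only: mult_less_cancel_left_pos)
  have "k = -9 \<or> k = -8 \<or> k = -7 \<or> k = -6 \<or> k = -5 \<or> k = -4 \<or> k = -3 \<or> k = -2 \<or> k = -1 \<or> k = 0 \<or> k = 1 \<or> k = 2 \<or> k = 3 \<or> k = 4 \<or> k = 5 \<or> k = 6 \<or> k = 7 \<or> k = 8 \<or> k = 9"
    using \<open>k < 10\<close> \<open>-10 < k\<close> by presburger
  thus ?thesis using k by (auto simp: algebra_simps)
qed

lemma C12:
  fixes m x y :: int
  assumes "4 \<le> m" "0 \<le> x" "x \<le> 2*m" "0 \<le> y" "y \<le> 2*m"
  shows "\<not> (2*m+1) dvd (P1 (2*m+1) x - x - (2 * P2 m y + be m) + (-2*y + al m))"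
proof
  assume dv: "(2*m+1) dvd (P1 (2*m+1) x - x - (2 * P2 m y + be m) + (-2*y + al m))"
  define e where "e = P1 (2*m+1) x - x - (2 * P2 m y + be m) + (-2*y + al m)"
  have b1: "- (6*(2*m+1)) < e"
    using assms unfolding e_def P1_def P2_def al_def be_def by auto
  have b2: "e < 6*(2*m+1)"
    using assms unfolding e_def P1_def P2_def al_def be_def by auto
  have D: "e = -5*(2*m+1) \<or> e = -4*(2*m+1) \<or> e = -3*(2*m+1) \<or> e = -2*(2*m+1) \<or> e = -(2*m+1) \<or> e = 0 \<or> e = (2*m+1) \<or> e = 2*(2*m+1) \<or> e = 3*(2*m+1) \<or> e = 4*(2*m+1) \<or> e = 5*(2*m+1)"
    using dvd_small[of "2*m+1" e] dv b1 b2 assms unfolding e_def by auto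
  have M: "m mod 4 = 0 \<or> m mod 4 = 1 \<or> m mod 4 = 2 \<or> m mod 4 = 3" by presburger
  show False using D M assms unfolding e_def P1_def P2_def al_def be_def
    by (auto split: if_splits) presburger+
qed

lemma C13:
  fixes m x y :: int
  assumes "4 \<le> m" "0 \<le> x" "x \<le> 2*m" "0 \<le> y" "y \<le> 2*m"
  shows "\<not> (2*m+1) dvd (x + P1 (2*m+1) x + (4 * P2 m y + 4) - 4 * y)"
proof
  define e where "e = x + P1 (2*m+1) x + (4 * P2 m y + 4) - 4 * y"
  assume dv: "(2*m+1) dvd (x + P1 (2*m+1) x + (4 * P2 m y + 4) - 4 * y)"
  have b1: "- (10*(2*m+1)) < e" and b2: "e < 10*(2*m+1)"
    using assms unfolding e_def P1_def P2_def by auto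
  have D: "e = -9*(2*m+1) \<or> e = -8*(2*m+1) \<or> e = -7*(2*m+1) \<or> e = -6*(2*m+1) \<or> e = -5*(2*m+1) \<or> e = -4*(2*m+1) \<or> e = -3*(2*m+1) \<or> e = -2*(2*m+1) \<or> e = -(2*m+1) \<or> e = 0 \<or> e = (2*m+1) \<or> e = 2*(2*m+1) \<or> e = 3*(2*m+1) \<or> e = 4*(2*m+1) \<or> e = 5*(2*m+1) \<or> e = 6*(2*m+1) \<or> e = 7*(2*m+1) \<or> e = 8*(2*m+1) \<or> e = 9*(2*m+1)"
    using dvd_small10[of "2*m+1" e] dv b1 b2 assms unfolding e_def by auto
  show False using D assms unfolding e_def P1_def P2_def
    by (auto split: if_splits) presburger+
qed

lemma C23:
  fixes m x y :: int
  assumes "4 \<le> m" "0 \<le> x" "x \<le> 2*m" "0 \<le> y" "y \<le> 2*m"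
  shows "\<not> (2*m+1) dvd ((-2*x + al m) + (2 * P2 m x + be m) - 4 * y - (4 * P2 m y + 4))"
proof
  define e where "e = (-2*x + al m) + (2 * P2 m x + be m) - 4 * y - (4 * P2 m y + 4)"
  assume dv: "(2*m+1) dvd ((-2*x + al m) + (2 * P2 m x + be m) - 4 * y - (4 * P2 m y + 4))"
  have b1: "- (10*(2*m+1)) < e" and b2: "e < 10*(2*m+1)"
    using assms unfolding e_def P1_def P2_def al_def be_def by auto
  have D: "e = -9*(2*m+1) \<or> e = -8*(2*m+1) \<or> e = -7*(2*m+1) \<or> e = -6*(2*m+1) \<or> e = -5*(2*m+1) \<or> e = -4*(2*m+1) \<or> e = -3*(2*m+1) \<or> e = -2*(2*m+1) \<or> e = -(2*m+1) \<or> e = 0 \<or> e = (2*m+1) \<or> e = 2*(2*m+1) \<or> e = 3*(2*m+1) \<or> e = 4*(2*m+1) \<or> e = 5*(2*m+1) \<or> e = 6*(2*m+1) \<or> e = 7*(2*m+1) \<or> e = 8*(2*m+1) \<or> e = 9*(2*m+1)"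
    using dvd_small10[of "2*m+1" e] dv b1 b2 assms unfolding e_def by auto
  have M: "m mod 4 = 0 \<or> m mod 4 = 1 \<or> m mod 4 = 2 \<or> m mod 4 = 3" by presburger
  show False using D M assms unfolding e_def P2_def al_def be_def
    by (auto split: if_splits) presburger+
qed


lemma ndvd_diff:
  fixes d u w c :: int
  assumes "0 < d" "odd d" "0 \<le> u" "u < d" "0 \<le> w" "w < d" "u \<noteq> w" "c = 1 \<or> c = 2 \<or> c = 4"
  shows "\<not> d dvd (c * (u - w))"
proof
  assume dv: "d dvd (c * (u - w))"
  have "4 * (u - w) = (4 div c) * (c * (u - w))" using assms(8) by auto
  hence dv4: "d dvd (4 * (u - w))" using dv by (metis dvd_mult)
  have "- (10*d) < 4 * (u - w)" "4 * (u - w) < 10 * d" using assms by auto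
  from dvd_small10[OF assms(1) dv4 this] assms show False by presburger
qed

lemma P1_range: "5 \<le> d \<Longrightarrow> 0 \<le> x \<Longrightarrow> x < d \<Longrightarrow> 0 \<le> P1 d x \<and> P1 d x < d"
  unfolding P1_def by auto
lemma P1_inj: "5 \<le> d \<Longrightarrow> 0 \<le> x \<Longrightarrow> x < d \<Longrightarrow> 0 \<le> y \<Longrightarrow> y < d \<Longrightarrow> P1 d x = P1 d y \<Longrightarrow> x = y"
  unfolding P1_def by (auto split: if_splits)
lemma P2_range: "2 \<le> m \<Longrightarrow> 0 \<le> x \<Longrightarrow> x \<le> 2*m \<Longrightarrow> 0 \<le> P2 m x \<and> P2 m x \<le> 2*m"
  unfolding P2_def by auto
lemma P2_inj: "2 \<le> m \<Longrightarrow> 0 \<le> x \<Longrightarrow> x \<le> 2*m \<Longrightarrow> 0 \<le> y \<Longrightarrow> y \<le> 2*m \<Longrightarrow> P2 m x = P2 m y \<Longrightarrow> x = y"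
  unfolding P2_def by (auto split: if_splits)

lemma lower_big:
  assumes "odd d" "9 \<le> d"
  shows "\<exists>S. disjoint_lines_on_fermat d S \<and> finite S \<and> card S = 3 * d"
proof -
  define m where "m = (int d - 1) div 2"
  have dm: "int d = 2*m+1" using assms unfolding m_def by (auto elim!: oddE)
  have m4: "4 \<le> m" using assms dm by linarith
  have od: "odd (2*m+1)" by simp
  have rng: "x < d \<Longrightarrow> 0 \<le> int x \<and> int x \<le> 2*m" for x using dm by linarith
  show ?thesis
  proof (rule framework[where fA = "\<lambda>x. int x" and fB = "\<lambda>x. P1 (int d) (int x)"
        and gA = "\<lambda>x. -2 * int x + al m" and gB = "\<lambda>x. 2 * P2 m (int x) + be m"
        and hA = "\<lambda>x. 4 * int x" and hB = "\<lambda>x. 4 * P2 m (int x) + 4"])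
    show "0 < d" "odd d" using assms by auto
  next
    fix x y assume xy: "x < d" "y < d" "x \<noteq> y"
    have r: "0 \<le> int x" "int x < 2*m+1" "0 \<le> int y" "int y < 2*m+1" using rng xy by auto
    have ne: "int x \<noteq> int y" using xy by simp
    have p1: "0 \<le> P1 (2*m+1) (int x)" "P1 (2*m+1) (int x) < 2*m+1" "0 \<le> P1 (2*m+1) (int y)" "P1 (2*m+1) (int y) < 2*m+1"
      using P1_range[of "2*m+1"] m4 r by auto
    have p1n: "P1 (2*m+1) (int x) \<noteq> P1 (2*m+1) (int y)" using P1_inj[of "2*m+1" "int x" "int y"] m4 r ne by auto
    have p2: "0 \<le> P2 m (int x)" "P2 m (int x) < 2*m+1" "0 \<le> P2 m (int y)" "P2 m (int y) < 2*m+1"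
      using P2_range[of m] m4 r by auto
    have p2n: "P2 m (int x) \<noteq> P2 m (int y)" using P2_inj[of m "int x" "int y"] m4 r ne by auto
    have pos: "0 < 2*m+1" using m4 by simp
    have "\<not> (2*m+1) dvd (1 * (int x - int y))" by (rule ndvd_diff[OF pos od r ne]) simp
    moreover have "\<not> (2*m+1) dvd (1 * (P1 (2*m+1) (int x) - P1 (2*m+1) (int y)))" by (rule ndvd_diff[OF pos od p1 p1n]) simp
    moreover have "\<not> (2*m+1) dvd (2 * (int y - int x))" by (rule ndvd_diff[OF pos od r(3,4,1,2) ne[symmetric]]) simp
    moreover have "\<not> (2*m+1) dvd (2 * (P2 m (int x) - P2 m (int y)))" by (rule ndvd_diff[OF pos od p2 p2n]) simp
    moreover have "\<not> (2*m+1) dvd (4 * (int x - int y))" by (rule ndvd_diff[OF pos od r ne]) simp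
    moreover have "\<not> (2*m+1) dvd (4 * (P2 m (int x) - P2 m (int y)))" by (rule ndvd_diff[OF pos od p2 p2n]) simp
    ultimately show "\<not> int d dvd (int x - int y) \<and> \<not> int d dvd (P1 (int d) (int x) - P1 (int d) (int y)) \<and>
       \<not> int d dvd (-2 * int x + al m - (-2 * int y + al m)) \<and>
       \<not> int d dvd (2 * P2 m (int x) + be m - (2 * P2 m (int y) + be m)) \<and>
       \<not> int d dvd (4 * int x - 4 * int y) \<and> \<not> int d dvd (4 * P2 m (int x) + 4 - (4 * P2 m (int y) + 4))"
      unfolding dm by (simp add: algebra_simps)
  next
    fix x y assume xy: "x < d" "y < d"
    have r: "0 \<le> int x" "int x \<le> 2*m" "0 \<le> int y" "int y \<le> 2*m" using rng xy by auto
    show "\<not> int d dvd (P1 (int d) (int x) - int x - (2 * P2 m (int y) + be m) + (-2 * int y + al m))"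
      using C12[OF m4 r] unfolding dm .
    show "\<not> int d dvd (int x + P1 (int d) (int x) + (4 * P2 m (int y) + 4) - 4 * int y)"
      using C13[OF m4 r] unfolding dm .
    show "\<not> int d dvd (-2 * int x + al m + (2 * P2 m (int x) + be m) - 4 * int y - (4 * P2 m (int y) + 4))"
      using C23[OF m4 r] unfolding dm .
  qed
qed


theorem corollary4p6:
  fixes d :: nat
  assumes "odd d" and "d \<ge> 7"
  shows "(\<exists>S. disjoint_lines_on_fermat d S \<and> finite S \<and> card S = 3 * d)
       \<and> (\<forall>S. disjoint_lines_on_fermat d S \<longrightarrow> finite S \<and> card S \<le> 3 * d)"
proof
  show "\<exists>S. disjoint_lines_on_fermat d S \<and> finite S \<and> card S = 3 * d"
  proof (cases "d = 7")
    case True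
    thus ?thesis using lower7 by simp
  next
    case False
    hence "9 \<le> d" using assms by (auto elim!: oddE)
    thus ?thesis using lower_big assms(1) by blast
  qed
  show "\<forall>S. disjoint_lines_on_fermat d S \<longrightarrow> finite S \<and> card S \<le> 3 * d"
    using upper_bound assms(2) by auto
qed

end
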